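(* Let $\mathbf A$ be a finite subdirectly irreducible cBCK-algebra. Then, up to isomorphism, $$\mathcal S(\mathbf A)=\mathcal S_d(\mathbf A)\cup \mathcal S_\delta(\mathcal S_d(\mathbf A)).$$ Moreover, if every algebra in $\mathcal S_\delta(\mathcal S_d(\mathbf A))$ is a chain, then $\mathcal S(\mathbf A)=\mathcal S_d(\mathbf A)$.
   Context: A BCK-algebra is an algebra $(A,\ominus,0)$ of type $(2,0)$ satisfying $((x\ominus y)\ominus(x\ominus z))\ominus(z\ominus y)=0$, $x\ominus 0=x$, $0\ominus x=0$, and ($x\ominus y=0$ and $y\ominus x=0$ imply $x=y$); it is ordered by $x\le y$ iff $x\ominus y=0$. A cBCK-algebra is a BCK-algebra satisfying $x\ominus(x\ominus y)=y\ominus(y\ominus x)$; its order is a meet-semilattice with $x\wedge y=x\ominus(x\ominus y)$. Finite subdirectly irreducible cBCK-algebras are, as posets, rooted trees with root $0$. For an element $a$, $\mathrm{h}(a)=|[0,a]|-1$ is its height, and the height of an algebra is the maximum height of its elements; $\mathrm{m}(\cdot)$ denotes the set of maximal elements. $\mathcal S(\mathbf A)$ is the set of subalgebras of $\mathbf A$; $\mathcal S_d(\mathbf A)$ is the set of subalgebras of $\mathbf A$ whose universe is a downset of $\mathbf A$. For a finite cBCK-algebra $\mathbf C$ whose order is a rooted tree, of height $n$, and for $k$ a divisor of $n$ with $k\ne 1,n$, put $C_k=\{x\in C\mid k\text{ divides }\mathrm{h}(x)\}$; $\mathcal S_\delta(\mathbf C)$ denotes the set of subalgebras of $\mathbf C$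 whose universe is of the form $C_k\cup\mathrm{m}(\mathbf C)$ for such a $k$. For a set $\mathcal X$ of such algebras, $\mathcal S_\delta(\mathcal X)=\bigcup_{\mathbf C\in\mathcal X}\mathcal S_\delta(\mathbf C)$. *)

theory Defs
  imports Main
begin

text \<open>An algebra of type (2,0) is given by a carrier set A, a binary operation f
  (the BCK subtraction) and a constant z (the element 0).\<close>

definition bck :: "'a set \<Rightarrow> ('a \<Rightarrow> 'a \<Rightarrow> 'a) \<Rightarrow> 'a \<Rightarrow> bool" where
  "bck A f z \<longleftrightarrow> z \<in> A \<and> (\<forall>x\<in>A. \<forall>y\<in>A. f x y \<in> A)
     \<and> (\<forall>x\<in>A. \<forall>y\<in>A. \<forall>w\<in>A. f (f (f x y) (f x w)) (f w y) = z)
     \<and> (\<forall>x\<in>A. f x z = x)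
     \<and> (\<forall>x\<in>A. f z x = z)
     \<and> (\<forall>x\<in>A. \<forall>y\<in>A. f x y = z \<and> f y x = z \<longrightarrow> x = y)"

definition cbck :: "'a set \<Rightarrow> ('a \<Rightarrow> 'a \<Rightarrow> 'a) \<Rightarrow> 'a \<Rightarrow> bool" where
  "cbck A f z \<longleftrightarrow> bck A f z \<and> (\<forall>x\<in>A. \<forall>y\<in>A. f x (f x y) = f y (f y x))"

definition bleq :: "('a \<Rightarrow> 'a \<Rightarrow> 'a) \<Rightarrow> 'a \<Rightarrow> 'a \<Rightarrow> 'a \<Rightarrow> bool" where
  "bleq f z x y \<longleftrightarrow> f x y = z"

text \<open>Congruences of the algebra (compatibility with the constant is automatic).\<close>
definition congruence :: "'a set \<Rightarrow> ('a \<Rightarrow> 'a \<Rightarrow> 'a) \<Rightarrow> 'a rel \<Rightarrow> bool" where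
  "congruence A f \<theta> \<longleftrightarrow> equiv A \<theta>
     \<and> (\<forall>a b c d. (a, b) \<in> \<theta> \<and> (c, d) \<in> \<theta> \<longrightarrow> (f a c, f b d) \<in> \<theta>)"

text \<open>Subdirectly irreducible: nontrivial, and the non-identity congruences have a
  common non-diagonal pair (i.e. there is a monolith).\<close>
definition subdir_irred :: "'a set \<Rightarrow> ('a \<Rightarrow> 'a \<Rightarrow> 'a) \<Rightarrow> bool" where
  "subdir_irred A f \<longleftrightarrow> (\<exists>a\<in>A. \<exists>b\<in>A. a \<noteq> b \<and>
     (\<forall>\<theta>. congruence A f \<theta> \<and> \<theta> \<noteq> Id_on A \<longrightarrow> (a, b) \<in> \<theta>))"

definition subalg :: "'a set \<Rightarrow> ('a \<Rightarrow> 'a \<Rightarrow> 'a) \<Rightarrow> 'a \<Rightarrow> 'a set \<Rightarrow> bool" where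
  "subalg A f z B \<longleftrightarrow> B \<subseteq> A \<and> z \<in> B \<and> (\<forall>x\<in>B. \<forall>y\<in>B. f x y \<in> B)"

definition is_downset :: "'a set \<Rightarrow> ('a \<Rightarrow> 'a \<Rightarrow> 'a) \<Rightarrow> 'a \<Rightarrow> 'a set \<Rightarrow> bool" where
  "is_downset A f z B \<longleftrightarrow> (\<forall>x\<in>B. \<forall>y\<in>A. bleq f z y x \<longrightarrow> y \<in> B)"

definition Subs :: "'a set \<Rightarrow> ('a \<Rightarrow> 'a \<Rightarrow> 'a) \<Rightarrow> 'a \<Rightarrow> 'a set set" where
  "Subs A f z = {B. subalg A f z B}"

definition Subs_d :: "'a set \<Rightarrow> ('a \<Rightarrow> 'a \<Rightarrow> 'a) \<Rightarrow> 'a \<Rightarrow> 'a set set" where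
  "Subs_d A f z = {B. subalg A f z B \<and> is_downset A f z B}"

definition elt_height :: "'a set \<Rightarrow> ('a \<Rightarrow> 'a \<Rightarrow> 'a) \<Rightarrow> 'a \<Rightarrow> 'a \<Rightarrow> nat" where
  "elt_height C f z a = card {x \<in> C. bleq f z z x \<and> bleq f z x a} - 1"

definition alg_height :: "'a set \<Rightarrow> ('a \<Rightarrow> 'a \<Rightarrow> 'a) \<Rightarrow> 'a \<Rightarrow> nat" where
  "alg_height C f z = Max (elt_height C f z ` C)"

definition maximals :: "'a set \<Rightarrow> ('a \<Rightarrow> 'a \<Rightarrow> 'a) \<Rightarrow> 'a \<Rightarrow> 'a set" where
  "maximals C f z = {x \<in> C. \<forall>y\<in>C. bleq f z x y \<longrightarrow> y = x}"

definition is_chain :: "'a set \<Rightarrow> ('a \<Rightarrow> 'a \<Rightarrow> 'a) \<Rightarrow> 'a \<Rightarrow> bool" where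
  "is_chain C f z \<longleftrightarrow> (\<forall>x\<in>C. \<forall>y\<in>C. bleq f z x y \<or> bleq f z y x)"

definition rooted_tree :: "'a set \<Rightarrow> ('a \<Rightarrow> 'a \<Rightarrow> 'a) \<Rightarrow> 'a \<Rightarrow> bool" where
  "rooted_tree C f z \<longleftrightarrow> finite C \<and> z \<in> C \<and> (\<forall>x\<in>C. bleq f z z x)
     \<and> (\<forall>a\<in>C. is_chain {x \<in> C. bleq f z x a} f z)"

definition C_k :: "'a set \<Rightarrow> ('a \<Rightarrow> 'a \<Rightarrow> 'a) \<Rightarrow> 'a \<Rightarrow> nat \<Rightarrow> 'a set" where
  "C_k C f z k = {x \<in> C. k dvd elt_height C f z x}"

definition Subs_delta :: "'a set \<Rightarrow> ('a \<Rightarrow> 'a \<Rightarrow> 'a) \<Rightarrow> 'a \<Rightarrow> 'a set set" where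
  "Subs_delta C f z = {D. rooted_tree C f z \<and> subalg C f z D \<and>
     (\<exists>k. 0 < k \<and> k dvd alg_height C f z \<and> k \<noteq> 1 \<and> k \<noteq> alg_height C f z
          \<and> D = C_k C f z k \<union> maximals C f z)}"

definition Subs_delta_set :: "'a set set \<Rightarrow> ('a \<Rightarrow> 'a \<Rightarrow> 'a) \<Rightarrow> 'a \<Rightarrow> 'a set set" where
  "Subs_delta_set X f z = (\<Union>C\<in>X. Subs_delta C f z)"

definition alg_iso :: "('a \<Rightarrow> 'a \<Rightarrow> 'a) \<Rightarrow> 'a \<Rightarrow> 'a set \<Rightarrow> 'a set \<Rightarrow> bool" where
  "alg_iso f z B D \<longleftrightarrow> (\<exists>\<phi>. bij_betw \<phi> B D \<and> \<phi> z = z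
     \<and> (\<forall>x\<in>B. \<forall>y\<in>B. \<phi> (f x y) = f (\<phi> x) (\<phi> y)))"

definition eq_upto_iso :: "('a \<Rightarrow> 'a \<Rightarrow> 'a) \<Rightarrow> 'a \<Rightarrow> 'a set set \<Rightarrow> 'a set set \<Rightarrow> bool" where
  "eq_upto_iso f z X Y \<longleftrightarrow> (\<forall>B\<in>X. \<exists>D\<in>Y. alg_iso f z B D) \<and> (\<forall>D\<in>Y. \<exists>B\<in>X. alg_iso f z D B)"

end

theory Submission
  imports Defs
begin

locale cb =
  fixes A :: "'a set" and f :: "'a \<Rightarrow> 'a \<Rightarrow> 'a" and z :: 'a
  assumes zA: "z \<in> A" and cl: "\<And>x y. x \<in> A \<Longrightarrow> y \<in> A \<Longrightarrow> f x y \<in> A"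
  and ax1: "\<And>x y w. x \<in> A \<Longrightarrow> y \<in> A \<Longrightarrow> w \<in> A \<Longrightarrow> f (f (f x y) (f x w)) (f w y) = z"
  and ax2: "\<And>x. x \<in> A \<Longrightarrow> f x z = x"
  and ax3: "\<And>x. x \<in> A \<Longrightarrow> f z x = z"
  and ax4: "\<And>x y. x \<in> A \<Longrightarrow> y \<in> A \<Longrightarrow> f x y = z \<Longrightarrow> f y x = z \<Longrightarrow> x = y"
  and comm: "\<And>x y. x \<in> A \<Longrightarrow> y \<in> A \<Longrightarrow> f x (f x y) = f y (f y x)"
begin

lemma refl0: "x \<in> A \<Longrightarrow> f x x = z"
  using ax1[of x z z] by (simp add: ax2 ax3 zA cl)
lemma l1: "x \<in> A \<Longrightarrow> w \<in> A \<Longrightarrow> f (f x (f x w)) w = z"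
  using ax1[of x z w] by (simp add: ax2 ax3 zA cl)
lemma sub_le: "x \<in> A \<Longrightarrow> y \<in> A \<Longrightarrow> f (f x y) x = z"
  using ax1[of x y z] by (simp add: ax2 ax3 zA cl)
lemma trans_le: "x \<in> A \<Longrightarrow> y \<in> A \<Longrightarrow> w \<in> A \<Longrightarrow> f x y = z \<Longrightarrow> f y w = z \<Longrightarrow> f x w = z"
  using ax1[of x w y] by (simp add: ax2 cl)
lemma anti: "x \<in> A \<Longrightarrow> y \<in> A \<Longrightarrow> w \<in> A \<Longrightarrow> f y w = z \<Longrightarrow> f (f x w) (f x y) = z"
  using ax1[of x w y] by (simp add: ax2 cl)
lemma exch_le: assumes "x \<in> A" "y \<in> A" "w \<in> A" shows "f (f (f x y) w) (f (f x w) y) = z"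
proof -
  have a: "f (f (f x y) w) (f (f x y) (f x (f x w))) = z"
    using anti[of "f x y" "f x (f x w)" w] l1[of x w] assms cl by auto
  have b: "f (f (f x y) (f x (f x w))) (f (f x w) y) = z"
    using ax1[of x y "f x w"] assms cl by auto
  have m: "f (f x y) w \<in> A" "f (f x y) (f x (f x w)) \<in> A" "f (f x w) y \<in> A"
    using assms cl by auto
  show ?thesis by (rule trans_le[OF m a b])
qed
lemma exch: "x \<in> A \<Longrightarrow> y \<in> A \<Longrightarrow> w \<in> A \<Longrightarrow> f (f x y) w = f (f x w) y"
proof -
  assume h: "x \<in> A" "y \<in> A" "w \<in> A"
  have m: "f (f x y) w \<in> A" "f (f x w) y \<in> A" using h cl by auto
  show ?thesis by (rule ax4[OF m exch_le[OF h] exch_le[of x w y]]) (use h in auto)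
qed
lemma swap: "x \<in> A \<Longrightarrow> y \<in> A \<Longrightarrow> w \<in> A \<Longrightarrow> f (f x y) w = z \<Longrightarrow> f (f x w) y = z"
  using exch[of x y w] by simp
lemma ax1': "x \<in> A \<Longrightarrow> y \<in> A \<Longrightarrow> w \<in> A \<Longrightarrow> f (f (f x y) (f w y)) (f x w) = z"
  using swap[OF _ _ _ ax1[of x y w]] by (simp add: cl)
lemma monl: "x \<in> A \<Longrightarrow> y \<in> A \<Longrightarrow> w \<in> A \<Longrightarrow> f x w = z \<Longrightarrow> f (f x y) (f w y) = z"
  using ax1'[of x y w] by (simp add: ax2 cl)
lemma le_z: "x \<in> A \<Longrightarrow> f x z = z \<Longrightarrow> x = z"
  using ax2[of x] by simp
lemma z_le: "x \<in> A \<Longrightarrow> f z x = z" by (rule ax3)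
lemma inv: "x \<in> A \<Longrightarrow> y \<in> A \<Longrightarrow> f y x = z \<Longrightarrow> f x (f x y) = y"
  using comm[of x y] ax2[of y] by simp
lemma meet_le1: "x \<in> A \<Longrightarrow> y \<in> A \<Longrightarrow> f (f x (f x y)) x = z"
  by (simp add: cl sub_le)
lemma meet_le2: "x \<in> A \<Longrightarrow> y \<in> A \<Longrightarrow> f (f x (f x y)) y = z"
  by (rule l1)
lemma glb: "x \<in> A \<Longrightarrow> y \<in> A \<Longrightarrow> w \<in> A \<Longrightarrow> f w x = z \<Longrightarrow> f w y = z \<Longrightarrow> f w (f x (f x y)) = z"
proof -
  assume h: "x \<in> A" "y \<in> A" "w \<in> A" "f w x = z" "f w y = z"
  have "f (f x y) (f x w) = z" using anti[of x w y] h by simp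
  hence "f (f x (f x w)) (f x (f x y)) = z" using anti[of x "f x y" "f x w"] h cl by simp
  thus ?thesis using inv[of x w] h by simp
qed
lemma meet_zero_sub: "w \<in> A \<Longrightarrow> y \<in> A \<Longrightarrow> f w (f w y) = z \<Longrightarrow> f w y = w"
  using ax4[of "f w y" w] sub_le[of w y] cl by simp


definition ideal :: "'a set \<Rightarrow> bool" where
  "ideal J \<longleftrightarrow> J \<subseteq> A \<and> z \<in> J \<and> (\<forall>x y. x \<in> A \<longrightarrow> y \<in> J \<longrightarrow> f x y \<in> J \<longrightarrow> x \<in> J)"
definition theta :: "'a set \<Rightarrow> 'a rel" where
  "theta J = {(x,y). x \<in> A \<and> y \<in> A \<and> f x y \<in> J \<and> f y x \<in> J}"
definition ann :: "'a set \<Rightarrow> 'a set" where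
  "ann S = {x \<in> A. \<forall>s\<in>S. f x (f x s) = z}"

lemma ideal_down: "ideal J \<Longrightarrow> y \<in> J \<Longrightarrow> x \<in> A \<Longrightarrow> f x y = z \<Longrightarrow> x \<in> J"
  unfolding ideal_def by (metis subsetD)

lemma theta_cong: assumes J: "ideal J" shows "congruence A f (theta J)"
proof -
  have JA: "J \<subseteq> A" and zJ: "z \<in> J" and Jc: "\<And>x y. x \<in> A \<Longrightarrow> y \<in> J \<Longrightarrow> f x y \<in> J \<Longrightarrow> x \<in> J"
    using J unfolding ideal_def by auto
  have tr: "f x w \<in> J" if "x \<in> A" "y \<in> A" "w \<in> A" "f x y \<in> J" "f y w \<in> J" for x y w
  proof -
    have "f (f (f x w) (f x y)) (f y w) = z" using ax1[of x w y] that by simp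
    hence "f (f x w) (f x y) \<in> J" using ideal_down[OF J that(5)] that cl by auto
    thus ?thesis using Jc[of "f x w" "f x y"] that cl by auto
  qed
  have r: "refl_on A (theta J)" unfolding refl_on_def theta_def using refl0 zJ by auto
  have s: "sym (theta J)" unfolding sym_def theta_def by auto
  have t: "trans (theta J)" unfolding trans_def
  proof (intro allI impI)
    fix x y w assume a: "(x,y) \<in> theta J" "(y,w) \<in> theta J"
    hence h: "x \<in> A" "y \<in> A" "w \<in> A" "f x y \<in> J" "f y x \<in> J" "f y w \<in> J" "f w y \<in> J"
      unfolding theta_def by auto
    have "f x w \<in> J" using tr[of x y w] h by blast
    moreover have "f w x \<in> J" using tr[of w y x] h by blast
    ultimately show "(x,w) \<in> theta J" unfolding theta_def using h by auto
  qed
  have sub: "theta J \<subseteq> A \<times> A" unfolding theta_def by auto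
  have eq: "equiv A (theta J)" unfolding equiv_def using sub r s t by blast
  have c1: "(f a c, f b c) \<in> theta J" if "(a,b) \<in> theta J" "c \<in> A" for a b c
  proof -
    have h: "a \<in> A" "b \<in> A" "f a b \<in> J" "f b a \<in> J" using that unfolding theta_def by auto
    have "f (f (f a c) (f b c)) (f a b) = z" using ax1'[of a c b] h that by simp
    hence 1: "f (f a c) (f b c) \<in> J" using ideal_down[OF J h(3)] h that cl by auto
    have "f (f (f b c) (f a c)) (f b a) = z" using ax1'[of b c a] h that by simp
    hence 2: "f (f b c) (f a c) \<in> J" using ideal_down[OF J h(4)] h that cl by auto
    show ?thesis using 1 2 h that cl unfolding theta_def by auto
  qed
  have c2: "(f b c, f b d) \<in> theta J" if "(c,d) \<in> theta J" "b \<in> A" for b c d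
  proof -
    have h: "c \<in> A" "d \<in> A" "f c d \<in> J" "f d c \<in> J" using that unfolding theta_def by auto
    have "f (f (f b c) (f b d)) (f d c) = z" using ax1[of b c d] h that by simp
    hence 1: "f (f b c) (f b d) \<in> J" using ideal_down[OF J h(4)] h that cl by auto
    have "f (f (f b d) (f b c)) (f c d) = z" using ax1[of b d c] h that by simp
    hence 2: "f (f b d) (f b c) \<in> J" using ideal_down[OF J h(3)] h that cl by auto
    show ?thesis using 1 2 h that cl unfolding theta_def by auto
  qed
  have "(f a c, f b d) \<in> theta J" if "(a,b) \<in> theta J" "(c,d) \<in> theta J" for a b c d
  proof -
    have "c \<in> A" "b \<in> A" using that unfolding theta_def by auto
    hence "(f a c, f b c) \<in> theta J" "(f b c, f b d) \<in> theta J" using c1 c2 that by auto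
    thus ?thesis using eq unfolding equiv_def trans_def by blast
  qed
  thus ?thesis unfolding congruence_def using eq by blast
qed

lemma ann_ideal: assumes S: "S \<subseteq> A" shows "ideal (ann S)"
proof -
  have "x \<in> ann S" if x: "x \<in> A" and y: "y \<in> ann S" and xy: "f x y \<in> ann S" for x y
  proof -
    have yA: "y \<in> A" using y unfolding ann_def by auto
    have "f x (f x s) = z" if s: "s \<in> S" for s
    proof -
      have sA: "s \<in> A" using s S by auto
      define w where "w = f x (f x s)"
      have wA: "w \<in> A" using w_def x sA cl by auto
      have wx: "f w x = z" and ws: "f w s = z" using meet_le1 meet_le2 x sA w_def by auto
      have mA: "f w (f w y) \<in> A" using wA yA cl by auto
      have "f (f w (f w y)) w = z" using meet_le1 wA yA by auto
      hence m1: "f (f w (f w y)) s = z" using trans_le[OF mA wA sA] ws by auto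
      have m2: "f (f w (f w y)) y = z" using meet_le2 wA yA by auto
      have "f (f w (f w y)) (f s (f s y)) = z" using glb[OF sA yA mA m1 m2] .
      moreover have "f s (f s y) = z" using comm[OF sA yA] y s unfolding ann_def by auto
      ultimately have "f w (f w y) = z" using ax2[OF mA] by simp
      hence wy: "f w y = w" using meet_zero_sub wA yA by auto
      have "f (f w y) (f x y) = z" using monl[OF wA yA x wx] .
      hence w1: "f w (f x y) = z" using wy by simp
      have xyA: "f x y \<in> A" using x yA cl by auto
      have "f w (f (f x y) (f (f x y) s)) = z" using glb[OF xyA sA wA w1 ws] .
      moreover have "f (f x y) (f (f x y) s) = z" using xy s unfolding ann_def by auto
      ultimately have "w = z" using ax2[OF wA] by simp
      thus ?thesis using w_def by simp
    qed
    thus ?thesis using x unfolding ann_def by auto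
  qed
  moreover have "z \<in> ann S" unfolding ann_def using zA ax3 S cl by auto
  moreover have "ann S \<subseteq> A" unfolding ann_def by auto
  ultimately show ?thesis unfolding ideal_def by blast
qed

lemma si_atom:
  assumes si: "subdir_irred A f" and u: "u \<in> A" and v: "v \<in> A" and m: "f u (f u v) = z"
  shows "u = z \<or> v = z"
proof (rule ccontr)
  assume nz: "\<not> (u = z \<or> v = z)"
  define J1 where "J1 = ann {v}"
  define J2 where "J2 = ann J1"
  have J1A: "J1 \<subseteq> A" unfolding J1_def ann_def by auto
  have i1: "ideal J1" unfolding J1_def using ann_ideal v by auto
  have i2: "ideal J2" unfolding J2_def using ann_ideal J1A by auto
  have uJ1: "u \<in> J1" unfolding J1_def ann_def using u m by auto
  have vJ2: "v \<in> J2" unfolding J2_def ann_def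
  proof (safe intro!: v)
    fix j assume "j \<in> J1"
    hence "j \<in> A" "f j (f j v) = z" unfolding J1_def ann_def by auto
    thus "f v (f v j) = z" using comm v by metis
  qed
  have zJ: "z \<in> J1" "z \<in> J2" using i1 i2 unfolding ideal_def by auto
  have n1: "theta J1 \<noteq> Id_on A"
  proof
    assume "theta J1 = Id_on A"
    moreover have "(u, z) \<in> theta J1" unfolding theta_def using u zA uJ1 zJ ax2 ax3 by auto
    ultimately show False using nz by auto
  qed
  have n2: "theta J2 \<noteq> Id_on A"
  proof
    assume "theta J2 = Id_on A"
    moreover have "(v, z) \<in> theta J2" unfolding theta_def using v zA vJ2 zJ ax2 ax3 by auto
    ultimately show False using nz by auto
  qed
  obtain a b where ab: "a \<in> A" "b \<in> A" "a \<noteq> b"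
    and all: "\<And>\<theta>. congruence A f \<theta> \<and> \<theta> \<noteq> Id_on A \<Longrightarrow> (a, b) \<in> \<theta>"
    using si unfolding subdir_irred_def by blast
  have t1: "(a,b) \<in> theta J1" using all theta_cong[OF i1] n1 by auto
  have t2: "(a,b) \<in> theta J2" using all theta_cong[OF i2] n2 by auto
  have zero: "x = z" if "x \<in> J1" "x \<in> J2" for x
  proof -
    have xA: "x \<in> A" using that J1A by auto
    have "f x (f x x) = z" using that unfolding J2_def ann_def by auto
    thus ?thesis using refl0[OF xA] ax2[OF xA] by simp
  qed
  have "f a b = z" "f b a = z" using t1 t2 zero unfolding theta_def by auto
  thus False using ax4 ab by auto
qed

end

locale fcb = cb +
  assumes fin: "finite A"
  and at: "\<And>u v. u \<in> A \<Longrightarrow> v \<in> A \<Longrightarrow> f u (f u v) = z \<Longrightarrow> u = z \<or> v = z"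
begin

definition dn :: "'a \<Rightarrow> 'a set" where "dn a = {x \<in> A. f x a = z}"

lemma dn_fin: "finite (dn a)" unfolding dn_def using fin by auto
lemma dn_self: "a \<in> A \<Longrightarrow> a \<in> dn a" unfolding dn_def using refl0 by auto
lemma dn_mono: "c \<in> A \<Longrightarrow> w \<in> A \<Longrightarrow> f c w = z \<Longrightarrow> dn c \<subseteq> dn w"
  unfolding dn_def using trans_le by blast

lemma exists_max: assumes "finite S" "S \<noteq> {}" "S \<subseteq> A"
  shows "\<exists>c\<in>S. \<forall>w\<in>S. f c w = z \<longrightarrow> w = c"
proof -
  define M where "M = Max ((\<lambda>w. card (dn w)) ` S)"
  have "M \<in> (\<lambda>w. card (dn w)) ` S" unfolding M_def using assms by (intro Max_in) auto
  then obtain c where c: "c \<in> S" "card (dn c) = M" by auto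
  have "w = c" if w: "w \<in> S" "f c w = z" for w
  proof -
    have cA: "c \<in> A" and wA: "w \<in> A" using c w assms by auto
    have "card (dn w) \<le> M" unfolding M_def using assms w by (intro Max_ge) auto
    moreover have sub: "dn c \<subseteq> dn w" using dn_mono cA wA w by auto
    ultimately have "dn c = dn w" using card_subset_eq[OF dn_fin sub] card_mono[OF dn_fin sub] c by auto
    hence "w \<in> dn c" using dn_self wA by auto
    hence "f w c = z" unfolding dn_def by auto
    thus ?thesis using ax4 cA wA w by auto
  qed
  thus ?thesis using c by auto
qed

lemma cover_unique:
  assumes A: "b \<in> A" "x \<in> A" "y \<in> A" and le: "f x b = z" "f y b = z" and ne: "x \<noteq> b" "y \<noteq> b"
  and mx: "\<And>w. w \<in> A \<Longrightarrow> f x w = z \<Longrightarrow> f w b = z \<Longrightarrow> w = x \<or> w = b"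
  and my: "\<And>w. w \<in> A \<Longrightarrow> f y w = z \<Longrightarrow> f w b = z \<Longrightarrow> w = y \<or> w = b"
  shows "x = y"
proof -
  define sx where "sx = f b x"
  define sy where "sy = f b y"
  have sA: "sx \<in> A" "sy \<in> A" using A cl sx_def sy_def by auto
  have sb: "f sx b = z" "f sy b = z" using sub_le A sx_def sy_def by auto
  have ix: "f b sx = x" and iy: "f b sy = y" using inv A le sx_def sy_def by auto
  have snz: "sx \<noteq> z" "sy \<noteq> z" using ax4 A le ne sx_def sy_def by auto
  define w where "w = f sx (f sx sy)"
  have wA: "w \<in> A" using sA cl w_def by auto
  have wnz: "w \<noteq> z" using at[OF sA] snz w_def by auto
  have w1: "f w sx = z" and w2: "f w sy = z" using meet_le1 meet_le2 sA w_def by auto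
  have wb: "f w b = z" using trans_le[OF wA sA(1) A(1) w1 sb(1)] .
  have key: "w = s" if s: "s \<in> A" "f w s = z" "f s b = z" and t: "t \<in> A" "f t b = z" "f b s = t"
    and mt: "\<And>v. v \<in> A \<Longrightarrow> f t v = z \<Longrightarrow> f v b = z \<Longrightarrow> v = t \<or> v = b" for s t
  proof -
    have "f (f b s) (f b w) = z" using anti[OF A(1) wA s(1) s(2)] .
    hence tw: "f t (f b w) = z" using t by simp
    have swA: "f b w \<in> A" using A wA cl by auto
    have "f (f b w) b = z" using sub_le A wA by auto
    hence "f b w = t \<or> f b w = b" using mt[OF swA tw] by auto
    moreover have "f b (f b w) = w" using inv A wA wb by auto
    moreover have "f b (f b s) = s" using inv A s by auto
    moreover have "f b b = z" using refl0 A by auto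
    ultimately show ?thesis using wnz t by auto
  qed
  have "w = sx" using key[of sx x] w1 sb ix A le mx sA by auto
  moreover have "w = sy" using key[of sy y] w2 sb iy A le my sA by auto
  ultimately show ?thesis using ix iy by auto
qed

lemma chain_all:
  "a \<in> A \<Longrightarrow> x \<in> A \<Longrightarrow> y \<in> A \<Longrightarrow> f x a = z \<Longrightarrow> f y a = z \<Longrightarrow> f x y = z \<or> f y x = z"
proof (induction "card (dn a)" arbitrary: a x y rule: less_induct)
  case less
  show ?case
  proof (cases "x = a \<or> y = a")
    case True
    thus ?thesis using less.prems by auto
  next
    case False
    have getc: "\<exists>c. c \<in> A \<and> f u c = z \<and> f c a = z \<and> c \<noteq> a \<and>
        (\<forall>w. w \<in> A \<longrightarrow> f c w = z \<longrightarrow> f w a = z \<longrightarrow> w = c \<or> w = a)"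
      if u: "u \<in> A" "f u a = z" "u \<noteq> a" for u
    proof -
      define S where "S = {w \<in> A. f u w = z \<and> f w a = z \<and> w \<noteq> a}"
      have "u \<in> S" using u refl0[OF u(1)] S_def by blast
      moreover have "S \<subseteq> A" using S_def by auto
      moreover have "finite S" using fin \<open>S \<subseteq> A\<close> finite_subset by auto
      ultimately have "\<exists>c\<in>S. \<forall>w\<in>S. f c w = z \<longrightarrow> w = c" using exists_max[of S] by blast
      then obtain c where c: "c \<in> S" "\<forall>w\<in>S. f c w = z \<longrightarrow> w = c" by blast
      have "w = c \<or> w = a" if "w \<in> A" "f c w = z" "f w a = z" for w
      proof (cases "w = a")
        case False
        have cc: "c \<in> A" "f u c = z" using c(1) S_def by auto
        have "f u w = z" using trans_le[OF u(1) cc(1) that(1) cc(2) that(2)] .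
        hence "w \<in> S" using S_def that False by auto
        thus ?thesis using c that by auto
      qed simp
      thus ?thesis using c S_def by auto
    qed
    have xa: "x \<noteq> a" using False by simp
    obtain cx where cx0: "cx \<in> A \<and> f x cx = z \<and> f cx a = z \<and> cx \<noteq> a \<and>
        (\<forall>w. w \<in> A \<longrightarrow> f cx w = z \<longrightarrow> f w a = z \<longrightarrow> w = cx \<or> w = a)"
      using getc[OF less.prems(2,4) xa] by blast
    hence cx: "cx \<in> A" "f x cx = z" "f cx a = z" "cx \<noteq> a"
      "\<And>w. w \<in> A \<Longrightarrow> f cx w = z \<Longrightarrow> f w a = z \<Longrightarrow> w = cx \<or> w = a"
      by blast+
    have ya: "y \<noteq> a" using False by simp
    obtain cy where cy0: "cy \<in> A \<and> f y cy = z \<and> f cy a = z \<and> cy \<noteq> a \<and>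
        (\<forall>w. w \<in> A \<longrightarrow> f cy w = z \<longrightarrow> f w a = z \<longrightarrow> w = cy \<or> w = a)"
      using getc[OF less.prems(3,5) ya] by blast
    hence cy: "cy \<in> A" "f y cy = z" "f cy a = z" "cy \<noteq> a"
      "\<And>w. w \<in> A \<Longrightarrow> f cy w = z \<Longrightarrow> f w a = z \<Longrightarrow> w = cy \<or> w = a"
      by blast+
    have "cx = cy" using cover_unique[OF less.prems(1) cx(1) cy(1) cx(3) cy(3) cx(4) cy(4) cx(5) cy(5)] .
    have sub: "dn cx \<subseteq> dn a" using dn_mono[OF cx(1) less.prems(1) cx(3)] .
    have "a \<notin> dn cx"
    proof
      assume "a \<in> dn cx"
      hence "f a cx = z" unfolding dn_def by auto
      hence "a = cx" by (rule ax4[OF less.prems(1) cx(1) _ cx(3)])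
      thus False using cx(4) by simp
    qed
    moreover have "a \<in> dn a" using dn_self less.prems(1) by blast
    ultimately have ps: "dn cx \<subset> dn a" using sub by blast
    have card: "card (dn cx) < card (dn a)" by (rule psubset_card_mono[OF dn_fin ps])
    have ycx: "f y cx = z" using cy(2) \<open>cx = cy\<close> by simp
    show ?thesis by (rule less.hyps[OF card cx(1) less.prems(2) less.prems(3) cx(2) ycx])
  qed
qed


definition H :: "'a \<Rightarrow> nat" where "H a = card (dn a)"

lemma H_pos: "a \<in> A \<Longrightarrow> 1 \<le> H a"
proof -
  assume a: "a \<in> A"
  have "card (dn a) > 0" using dn_self[OF a] dn_fin card_gt_0_iff by blast
  thus ?thesis unfolding H_def by simp
qed
lemma H_mono: "x \<in> A \<Longrightarrow> y \<in> A \<Longrightarrow> f x y = z \<Longrightarrow> H x \<le> H y"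
  unfolding H_def by (rule card_mono[OF dn_fin dn_mono])
lemma dn_z: "dn z = {z}" unfolding dn_def using le_z zA refl0[OF zA] by blast
lemma H_z: "H z = 1" unfolding H_def using dn_z by simp
lemma cmp: "p \<in> A \<Longrightarrow> x \<in> dn p \<Longrightarrow> y \<in> dn p \<Longrightarrow> f x y = z \<or> f y x = z"
proof -
  assume a: "p \<in> A" "x \<in> dn p" "y \<in> dn p"
  hence b: "x \<in> A" "y \<in> A" "f x p = z" "f y p = z" unfolding dn_def by auto
  show ?thesis by (rule chain_all[OF a(1) b])
qed
lemma H_le_imp: assumes "p \<in> A" "x \<in> dn p" "y \<in> dn p" "H x \<le> H y" shows "f x y = z"
proof (rule ccontr)
  assume n: "f x y \<noteq> z"
  have A: "x \<in> A" "y \<in> A" using assms(2,3) unfolding dn_def by auto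
  have yx: "f y x = z" using cmp[OF assms(1-3)] n by blast
  have sub: "dn y \<subseteq> dn x" by (rule dn_mono[OF A(2) A(1) yx])
  have c1: "card (dn x) \<le> card (dn y)" using assms(4) unfolding H_def .
  have c2: "card (dn y) \<le> card (dn x)" by (rule card_mono[OF dn_fin sub])
  have "dn y = dn x" by (rule card_subset_eq[OF dn_fin sub]) (use c1 c2 in linarith)
  hence "x \<in> dn y" using dn_self[OF A(1)] by simp
  hence "f x y = z" unfolding dn_def by simp
  thus False using n by simp
qed
lemma H_inj: "p \<in> A \<Longrightarrow> x \<in> dn p \<Longrightarrow> y \<in> dn p \<Longrightarrow> H x = H y \<Longrightarrow> x = y"
proof -
  assume a: "p \<in> A" "x \<in> dn p" "y \<in> dn p" "H x = H y"
  have "f x y = z" "f y x = z" using H_le_imp[of p x y] H_le_imp[of p y x] a by auto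
  moreover have "x \<in> A" "y \<in> A" using a unfolding dn_def by auto
  ultimately show ?thesis using ax4[of x y] by simp
qed

lemma H_sig: assumes a: "a \<in> A" and y: "y \<in> A" and ya: "f y a = z"
  shows "H (f a y) + H y = H a + 1"
proof -
  define U where "U = {w \<in> dn a. f y w = z}"
  have ayA: "f a y \<in> A" using a y cl by auto
  have inj: "inj_on (f a) (dn a)"
  proof (rule inj_onI)
    fix u v assume uv: "u \<in> dn a" "v \<in> dn a" "f a u = f a v"
    have u: "u \<in> A" "f u a = z" and v: "v \<in> A" "f v a = z" using uv(1,2) unfolding dn_def by auto
    have "f a (f a u) = f a (f a v)" using uv(3) by simp
    thus "u = v" using inv[OF a u] inv[OF a v] by simp
  qed
  have e1: "dn (f a y) = f a ` U"
  proof
    show "dn (f a y) \<subseteq> f a ` U"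
    proof
      fix v assume "v \<in> dn (f a y)"
      hence v: "v \<in> A" "f v (f a y) = z" unfolding dn_def by auto
      have va: "f v a = z" using trans_le[OF v(1) ayA a v(2)] sub_le a y by auto
      have vv: "f a (f a v) = v" using inv a v va by auto
      have "f (f a (f a y)) (f a v) = z" using anti[OF a v(1) ayA v(2)] .
      hence "f y (f a v) = z" using inv a y ya by auto
      moreover have "f a v \<in> dn a" unfolding dn_def using sub_le a v cl by auto
      ultimately have "f a v \<in> U" unfolding U_def by auto
      thus "v \<in> f a ` U" using vv by force
    qed
  next
    show "f a ` U \<subseteq> dn (f a y)"
    proof
      fix v assume "v \<in> f a ` U"
      then obtain w where w: "w \<in> U" "v = f a w" by auto
      have wA: "w \<in> A" "f y w = z" using w U_def dn_def by auto
      have "f (f a w) (f a y) = z" using anti[OF a y wA(1) wA(2)] .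
      thus "v \<in> dn (f a y)" unfolding dn_def using w a wA cl by auto
    qed
  qed
  have "U \<subseteq> dn a" unfolding U_def by auto
  hence c1: "card (dn (f a y)) = card U" using e1 card_image[OF inj_on_subset[OF inj]] by simp
  have yd: "y \<in> dn a" using y ya dn_def by auto
  have part: "dn a = U \<union> (dn y - {y})"
  proof
    show "dn a \<subseteq> U \<union> (dn y - {y})"
    proof
      fix w assume w: "w \<in> dn a"
      hence wA: "w \<in> A" unfolding dn_def by auto
      show "w \<in> U \<union> (dn y - {y})"
        using cmp[OF a w yd] refl0[OF y] w wA unfolding U_def dn_def by auto
    qed
  next
    show "U \<union> (dn y - {y}) \<subseteq> dn a" unfolding U_def using dn_mono y a ya by auto
  qed
  have disj: "U \<inter> (dn y - {y}) = {}"
  proof (rule ccontr)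
    assume "U \<inter> (dn y - {y}) \<noteq> {}"
    then obtain w where "w \<in> A" "f y w = z" "f w y = z" "w \<noteq> y" unfolding U_def dn_def by blast
    thus False using ax4[of w y] y by blast
  qed
  have fU: "finite U" using finite_subset[OF \<open>U \<subseteq> dn a\<close> dn_fin] .
  have fy: "finite (dn y - {y})" using dn_fin by auto
  have "card (dn a) = card U + card (dn y - {y})" using part disj card_Un_disjoint[OF fU fy] by simp
  moreover have "card (dn y - {y}) = card (dn y) - 1" using dn_self[OF y] dn_fin by simp
  moreover have "1 \<le> card (dn y)" using H_pos[OF y] H_def by simp
  ultimately show ?thesis unfolding H_def using c1 by simp
qed

lemma exist_height: assumes p: "p \<in> A" and j: "1 \<le> j" "j \<le> H p"
  shows "\<exists>x\<in>dn p. H x = j"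
proof -
  have inj: "inj_on H (dn p)" unfolding inj_on_def using H_inj[OF p] by blast
  have sub: "H ` dn p \<subseteq> {1..H p}"
  proof
    fix k assume "k \<in> H ` dn p"
    then obtain x where x: "x \<in> dn p" "k = H x" by blast
    have xA: "x \<in> A" "f x p = z" using x(1) unfolding dn_def by auto
    show "k \<in> {1..H p}" using H_pos[OF xA(1)] H_mono[OF xA(1) p xA(2)] x(2) by simp
  qed
  have "card (H ` dn p) = H p" using card_image[OF inj] H_def by simp
  hence "H ` dn p = {1..H p}" using card_subset_eq[OF _ sub] by simp
  hence "j \<in> H ` dn p" using j by simp
  then obtain x where "x \<in> dn p" "j = H x" by (rule imageE)
  thus ?thesis by blast
qed

end

lemma arith1: "(g::nat) + k \<le> h - 1 \<Longrightarrow> y = h - k \<Longrightarrow> 1 \<le> g \<Longrightarrow> g + 1 \<le> y" by arith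

locale sub = fcb +
  fixes B :: "'a set"
  assumes BA: "B \<subseteq> A" and zB: "z \<in> B" and Bcl: "\<And>x y. x \<in> B \<Longrightarrow> y \<in> B \<Longrightarrow> f x y \<in> B"
  and Bnz: "B \<noteq> {z}"
begin

definition m0 :: 'a where "m0 = (SOME m. m \<in> B \<and> m \<noteq> z \<and> (\<forall>b\<in>B. b \<noteq> z \<longrightarrow> H m \<le> H b))"
definition g :: nat where "g = H m0 - 1"

lemma m0_ex: "\<exists>m. m \<in> B \<and> m \<noteq> z \<and> (\<forall>b\<in>B. b \<noteq> z \<longrightarrow> H m \<le> H b)"
proof -
  obtain b0 where "b0 \<in> B" "b0 \<noteq> z" using Bnz zB by blast
  hence "\<exists>m. (m \<in> B \<and> m \<noteq> z) \<and> (\<forall>b. (b \<in> B \<and> b \<noteq> z) \<longrightarrow> H m \<le> H b)"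
    by (intro ex_has_least_nat[of "\<lambda>m. m \<in> B \<and> m \<noteq> z" b0 H]) simp
  thus ?thesis by blast
qed

lemma m0_prop: "m0 \<in> B" "m0 \<noteq> z" "\<And>b. b \<in> B \<Longrightarrow> b \<noteq> z \<Longrightarrow> H m0 \<le> H b"
  using someI_ex[OF m0_ex] unfolding m0_def[symmetric] by auto

lemma m0A: "m0 \<in> A" using m0_prop BA by auto

lemma m0_le: assumes b: "b \<in> B" "b \<noteq> z" shows "f m0 b = z"
proof -
  have bA: "b \<in> A" using b BA by auto
  define w where "w = f m0 (f m0 b)"
  have wB: "w \<in> B" using Bcl m0_prop(1) b(1) w_def by auto
  have wA: "w \<in> A" using wB BA by auto
  have wnz: "w \<noteq> z" using at[OF m0A bA] m0_prop(2) b(2) w_def by auto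
  have w1: "f w m0 = z" using meet_le1[OF m0A bA] w_def by simp
  have w2: "f w b = z" using meet_le2[OF m0A bA] w_def by simp
  have "H m0 \<le> H w" using m0_prop(3)[OF wB wnz] .
  moreover have "H w \<le> H m0" using H_mono[OF wA m0A w1] .
  ultimately have "H w = H m0" by simp
  moreover have "w \<in> dn m0" "m0 \<in> dn m0" using wA w1 dn_self[OF m0A] unfolding dn_def by auto
  ultimately have "w = m0" using H_inj[OF m0A] by blast
  thus ?thesis using w2 by simp
qed

lemma g_pos: "1 \<le> g"
proof (rule ccontr)
  assume "\<not> 1 \<le> g"
  hence "H m0 \<le> 1" unfolding g_def by simp
  hence "H m0 = H z" using H_pos[OF m0A] H_z by simp
  moreover have "z \<in> dn m0" "m0 \<in> dn m0" using dn_self[OF m0A] z_le[OF m0A] zA unfolding dn_def by auto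
  ultimately have "m0 = z" using H_inj[OF m0A] by blast
  thus False using m0_prop(2) by simp
qed

lemma Hm0: "H m0 = g + 1" using g_pos unfolding g_def by simp

lemma step: assumes b: "b \<in> B" "b \<noteq> z"
  shows "f b m0 \<in> B" "H (f b m0) + g = H b" "f b m0 \<in> dn b"
proof -
  have bA: "b \<in> A" using b BA by auto
  show "f b m0 \<in> B" using Bcl b m0_prop by auto
  show "H (f b m0) + g = H b" using H_sig[OF bA m0A m0_le[OF b]] Hm0 by simp
  show "f b m0 \<in> dn b" unfolding dn_def using sub_le[OF bA m0A] cl[OF bA m0A] by simp
qed

lemma divis: "b \<in> B \<Longrightarrow> g dvd (H b - 1)"
proof (induction "H b" arbitrary: b rule: less_induct)
  case less
  show ?case
  proof (cases "b = z")
    case True thus ?thesis using H_z by simp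
  next
    case False
    have s: "f b m0 \<in> B" "H (f b m0) + g = H b" using step[OF less.prems False] by auto
    have "H (f b m0) < H b" using s(2) g_pos by simp
    hence d: "g dvd (H (f b m0) - 1)" using less.hyps s(1) by blast
    have "1 \<le> H (f b m0)" using H_pos s(1) BA by auto
    hence "H b - 1 = (H (f b m0) - 1) + g" using s(2) by simp
    thus ?thesis using d by simp
  qed
qed

lemma fill_aux: assumes p: "p \<in> B"
  shows "j * g \<le> H p - 1 \<Longrightarrow> \<exists>y\<in>B. y \<in> dn p \<and> H y = H p - j * g"
proof (induction j)
  case 0
  thus ?case using p dn_self BA by auto
next
  case (Suc j)
  have "j * g \<le> H p - 1" using Suc.prems by simp
  then obtain y where y: "y \<in> B" "y \<in> dn p" "H y = H p - j * g" using Suc.IH by blast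
  have "g + j * g \<le> H p - 1" using Suc.prems by simp
  moreover have "H y = H p - j * g" using y(3) .
  ultimately have "H y \<ge> g + 1" using arith1 g_pos by blast
  hence ynz: "y \<noteq> z" using H_z g_pos by auto
  have s: "f y m0 \<in> B" "H (f y m0) + g = H y" "f y m0 \<in> dn y" using step[OF y(1) ynz] by auto
  have pA: "p \<in> A" using p BA by auto
  have "f y m0 \<in> dn p" using s(3) y(2) dn_mono pA unfolding dn_def by auto
  moreover have "H (f y m0) = H p - Suc j * g" using s(2) y(3) Suc.prems by simp
  ultimately show ?case using s(1) by blast
qed

lemma fill: assumes p: "p \<in> B" and x: "x \<in> dn p" and d: "g dvd (H x - 1)" shows "x \<in> B"
proof -
  have pA: "p \<in> A" using p BA by auto
  have xA: "x \<in> A" "f x p = z" using x unfolding dn_def by auto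
  obtain q where q: "H x - 1 = g * q" using d by blast
  obtain N where N: "H p - 1 = g * N" using divis[OF p] by blast
  have h1: "1 \<le> H x" using H_pos[OF xA(1)] .
  have h2: "H x \<le> H p" using H_mono[OF xA(1) pA xA(2)] .
  have "H x - 1 \<le> H p - 1" using h2 by arith
  hence "g * q \<le> g * N" using q N by simp
  hence "(N - q) * g = g * N - g * q" by (simp add: diff_mult_distrib mult.commute)
  hence jg: "(N - q) * g = H p - H x" using q N h1 h2 by simp
  hence "(N - q) * g \<le> H p - 1" using h1 by simp
  then obtain y where y: "y \<in> B" "y \<in> dn p" "H y = H p - (N - q) * g" using fill_aux[OF p] by blast
  have "H y = H x" using y(3) jg h2 by simp
  hence "y = x" using H_inj[OF pA y(2) x] by simp
  thus ?thesis using y(1) by simp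
qed


definition C :: "'a set" where "C = {x \<in> A. \<exists>p\<in>B. f x p = z}"

lemma B_C: "B \<subseteq> C" unfolding C_def using BA refl0 by blast
lemma C_A: "C \<subseteq> A" unfolding C_def by auto
lemma dn_C: "x \<in> C \<Longrightarrow> dn x \<subseteq> C"
proof
  fix w assume x: "x \<in> C" and w: "w \<in> dn x"
  obtain p where p: "p \<in> B" "f x p = z" "x \<in> A" using x unfolding C_def by auto
  have wA: "w \<in> A" "f w x = z" using w unfolding dn_def by auto
  have "f w p = z" using trans_le[OF wA(1) p(3) _ wA(2) p(2)] p(1) BA by auto
  thus "w \<in> C" using wA p(1) unfolding C_def by auto
qed

lemma C_subd: "C \<in> Subs_d A f z"
proof -
  have zC: "z \<in> C" using zB B_C by auto
  have cC: "f x y \<in> C" if "x \<in> C" "y \<in> C" for x y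
  proof -
    have A: "x \<in> A" "y \<in> A" using that C_A by auto
    have "f x y \<in> dn x" unfolding dn_def using sub_le[OF A] cl[OF A] by simp
    thus ?thesis using dn_C[OF that(1)] by auto
  qed
  have dC: "y \<in> C" if "x \<in> C" "y \<in> A" "f y x = z" for x y
    using dn_C[OF that(1)] that(2,3) unfolding dn_def by auto
  show ?thesis unfolding Subs_d_def subalg_def is_downset_def bleq_def
    using C_A zC cC dC by blast
qed

lemma eh_C: assumes x: "x \<in> C" shows "elt_height C f z x = H x - 1"
proof -
  have "{w \<in> C. bleq f z z w \<and> bleq f z w x} = dn x"
    using dn_C[OF x] C_A ax3 unfolding bleq_def dn_def by auto
  thus ?thesis unfolding elt_height_def H_def by simp
qed

lemma rt_C: "rooted_tree C f z"
proof -
  have "finite C" using C_A fin finite_subset by auto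
  moreover have "z \<in> C" using zB B_C by auto
  moreover have "\<forall>x\<in>C. bleq f z z x" unfolding bleq_def using C_A ax3 by auto
  moreover have "is_chain {x \<in> C. bleq f z x a} f z" if a: "a \<in> C" for a
  proof -
    have aA: "a \<in> A" using a C_A by auto
    show ?thesis unfolding is_chain_def bleq_def
    proof (intro ballI)
      fix x y assume "x \<in> {x \<in> C. f x a = z}" "y \<in> {x \<in> C. f x a = z}"
      hence "x \<in> dn a" "y \<in> dn a" unfolding dn_def using C_A by auto
      thus "f x y = z \<or> f y x = z" using cmp[OF aA] by blast
    qed
  qed
  ultimately show ?thesis unfolding rooted_tree_def bleq_def by blast
qed

lemma max_C: "maximals C f z \<subseteq> B"
proof
  fix x assume "x \<in> maximals C f z"
  hence x: "x \<in> C" "\<And>y. y \<in> C \<Longrightarrow> f x y = z \<Longrightarrow> y = x" unfolding maximals_def bleq_def by auto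
  obtain p where p: "p \<in> B" "f x p = z" using x(1) unfolding C_def by auto
  have "p = x" using x(2)[of p] p B_C by auto
  thus "x \<in> B" using p by simp
qed

lemma Ck_B: "C_k C f z g = B"
proof
  show "C_k C f z g \<subseteq> B"
  proof
    fix x assume "x \<in> C_k C f z g"
    hence x: "x \<in> C" "g dvd (H x - 1)" unfolding C_k_def using eh_C by auto
    obtain p where p: "p \<in> B" "f x p = z" "x \<in> A" using x(1) unfolding C_def by auto
    show "x \<in> B" using fill[OF p(1) _ x(2)] p unfolding dn_def by auto
  qed
next
  show "B \<subseteq> C_k C f z g"
    unfolding C_k_def using B_C eh_C divis by auto
qed

lemma B_eq: "B = C_k C f z g \<union> maximals C f z" using Ck_B max_C by auto

definition n :: nat where "n = alg_height C f z"

lemma n_prop: "\<exists>p\<in>B. n = H p - 1" "\<And>x. x \<in> C \<Longrightarrow> H x - 1 \<le> n"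
proof -
  have fC: "finite C" using C_A fin finite_subset by auto
  have neC: "C \<noteq> {}" using zB B_C by auto
  show le: "\<And>x. x \<in> C \<Longrightarrow> H x - 1 \<le> n"
  proof -
    fix x assume x: "x \<in> C"
    have "elt_height C f z x \<le> Max (elt_height C f z ` C)" by (rule Max_ge) (use fC x in auto)
    thus "H x - 1 \<le> n" unfolding n_def alg_height_def using eh_C[OF x] by simp
  qed
  have "n \<in> elt_height C f z ` C" unfolding n_def alg_height_def using fC neC by (intro Max_in) auto
  then obtain q where q: "q \<in> C" "n = H q - 1" using eh_C by auto
  obtain p where p: "p \<in> B" "f q p = z" "q \<in> A" using q(1) unfolding C_def by auto
  have pA: "p \<in> A" using p BA by auto
  have "H q \<le> H p" using H_mono[OF p(3) pA p(2)] .
  moreover have "H p - 1 \<le> n" using le p(1) B_C by auto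
  ultimately have "n = H p - 1" using q(2) by simp
  thus "\<exists>p\<in>B. n = H p - 1" using p(1) by blast
qed

lemma g_dvd_n: "g dvd n" using n_prop(1) divis by auto
lemma g_le_n: "g \<le> n" using n_prop(2)[of m0] m0_prop(1) B_C Hm0 by auto

lemma tri: "B \<in> Subs_d A f z \<or> is_chain B f z \<or> B \<in> Subs_delta_set (Subs_d A f z) f z"
proof (cases "g = 1")
  case True
  have "C_k C f z g = C" unfolding C_k_def using True by auto
  hence "B = C" using Ck_B by simp
  thus ?thesis using C_subd by simp
next
  case g1: False
  show ?thesis
  proof (cases "g = n")
    case True
    have "b = m0" if b: "b \<in> B" "b \<noteq> z" for b
    proof -
      have bA: "b \<in> A" using b BA by auto
      have "H m0 \<le> H b" using m0_prop(3)[OF b] .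
      moreover have "H b - 1 \<le> n" using n_prop(2) b B_C by auto
      ultimately have HH: "H m0 = H b" using True Hm0 by simp
      have md: "m0 \<in> dn b" using m0_le[OF b] m0A unfolding dn_def by auto
      show ?thesis using H_inj[OF bA md dn_self[OF bA] HH] by simp
    qed
    hence "is_chain B f z" unfolding is_chain_def bleq_def
    proof (intro ballI)
      fix x y assume xy: "x \<in> B" "y \<in> B" and h: "\<And>b. b \<in> B \<Longrightarrow> b \<noteq> z \<Longrightarrow> b = m0"
      have xA: "x \<in> A" and yA: "y \<in> A" using xy BA by auto
      show "f x y = z \<or> f y x = z"
      proof (cases "x = z \<or> y = z")
        case True thus ?thesis using z_le xA yA by auto
      next
        case False
        hence "x = m0" "y = m0" using h xy by auto
        thus ?thesis using refl0 m0A by simp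
      qed
    qed
    thus ?thesis by simp
  next
    case False
    have "B \<in> Subs_delta C f z"
      unfolding Subs_delta_def
    proof (intro CollectI conjI rt_C exI)
      show "subalg C f z B" unfolding subalg_def using B_C zB Bcl by auto
      show "0 < g" using g_pos by simp
      show "g dvd alg_height C f z" using g_dvd_n n_def by simp
      show "g \<noteq> 1" using g1 .
      show "g \<noteq> alg_height C f z" using False n_def by simp
      show "B = C_k C f z g \<union> maximals C f z" using B_eq .
    qed
    thus ?thesis using C_subd unfolding Subs_delta_set_def by blast
  qed
qed


lemma dn_subd: assumes q: "q \<in> A" shows "dn q \<in> Subs_d A f z"
proof -
  have zq: "z \<in> dn q" unfolding dn_def using zA z_le[OF q] by simp
  have cq: "f x y \<in> dn q" if "x \<in> dn q" "y \<in> A" for x y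
  proof -
    have x: "x \<in> A" "f x q = z" using that unfolding dn_def by auto
    have "f (f x y) x = z" using sub_le[OF x(1) that(2)] .
    hence "f (f x y) q = z" using trans_le[OF cl[OF x(1) that(2)] x(1) q _ x(2)] by simp
    thus ?thesis unfolding dn_def using cl[OF x(1) that(2)] by simp
  qed
  have dq: "y \<in> dn q" if "x \<in> dn q" "y \<in> A" "f y x = z" for x y
  proof -
    have x: "x \<in> A" "f x q = z" using that unfolding dn_def by auto
    show ?thesis unfolding dn_def using trans_le[OF that(2) x(1) q that(3) x(2)] that(2) by simp
  qed
  have "dn q \<subseteq> A" unfolding dn_def by auto
  thus ?thesis unfolding Subs_d_def subalg_def is_downset_def bleq_def
    using zq cq dq by blast
qed

lemma chain_iso: assumes ch: "is_chain B f z" shows "\<exists>D\<in>Subs_d A f z. alg_iso f z B D"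
proof -
  obtain p where p: "p \<in> B" "\<And>b. b \<in> B \<Longrightarrow> card A - H p \<le> card A - H b"
    using ex_has_least_nat[of "\<lambda>b. b \<in> B" z "\<lambda>b. card A - H b"] zB by blast
  have pA: "p \<in> A" using p BA by auto
  have HA: "H b \<le> card A" if "b \<in> A" for b
    unfolding H_def dn_def using card_mono[OF fin] by auto
  have Hp: "H b \<le> H p" if "b \<in> B" for b using p(2)[OF that] HA[OF pA] HA that BA by force
  have Bp: "b \<in> dn p" if b: "b \<in> B" for b
  proof -
    have bA: "b \<in> A" using b BA by auto
    have "f b p = z \<or> f p b = z" using ch b p(1) unfolding is_chain_def bleq_def by auto
    moreover have "f b p = z" if pb: "f p b = z"
    proof -
      have "H p = H b" using Hp[OF b] H_mono[OF pA bA pb] by simp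
      moreover have "p \<in> dn b" unfolding dn_def using pA pb by simp
      ultimately have "p = b" using H_inj[OF bA _ dn_self[OF bA]] by blast
      thus ?thesis using refl0 bA by simp
    qed
    ultimately show ?thesis unfolding dn_def using bA by auto
  qed
  define el where "el j = (SOME x. x \<in> dn p \<and> H x = j + 1)" for j
  have el: "el j \<in> dn p" "H (el j) = j + 1" if "j \<le> H p - 1" for j
  proof -
    have "\<exists>x\<in>dn p. H x = j + 1" using exist_height[OF pA, of "j+1"] that H_pos[OF pA] by simp
    hence "\<exists>x. x \<in> dn p \<and> H x = j + 1" by blast
    from someI_ex[OF this] show "el j \<in> dn p" "H (el j) = j + 1" unfolding el_def by auto
  qed
  have elA: "el j \<in> A" if "j \<le> H p - 1" for j using el(1)[OF that] unfolding dn_def by auto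
  have el_uni: "el j = x" if "j \<le> H p - 1" "x \<in> dn p" "H x = j + 1" for j x
    using H_inj[OF pA el(1)[OF that(1)] that(2)] el(2)[OF that(1)] that(3) by simp
  define N where "N = (H p - 1) div g"
  have N1: "N \<le> H p - 1" unfolding N_def by simp
  have Ng: "N * g = H p - 1" unfolding N_def using divis[OF p(1)] by simp
  define q where "q = el N"
  have qd: "q \<in> dn p" "H q = N + 1" using el[OF N1] q_def by auto
  have qA: "q \<in> A" using qd unfolding dn_def by auto
  define \<phi> where "\<phi> x = el ((H x - 1) div g)" for x
  have hB: "(H x - 1) div g \<le> N" "(H x - 1) div g \<le> H p - 1" "((H x - 1) div g) * g = H x - 1"
    if x: "x \<in> B" for x
  proof -
    have "H x - 1 \<le> H p - 1" using Hp[OF x] by simp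
    thus "(H x - 1) div g \<le> N" unfolding N_def by (rule div_le_mono)
    thus "(H x - 1) div g \<le> H p - 1" using N1 by simp
    show "((H x - 1) div g) * g = H x - 1" using divis[OF x] by simp
  qed
  have phi: "\<phi> x \<in> dn p" "H (\<phi> x) = (H x - 1) div g + 1" if "x \<in> B" for x
    using el[OF hB(2)[OF that]] \<phi>_def by auto
  have le_of_H: "f u v = z" if "u \<in> dn p" "v \<in> dn p" "H u \<le> H v" for u v
    using H_le_imp[OF pA that] .
  have bij: "bij_betw \<phi> B (dn q)"
  proof (rule bij_betw_imageI)
    show "inj_on \<phi> B"
    proof (rule inj_onI)
      fix x y assume xy: "x \<in> B" "y \<in> B" "\<phi> x = \<phi> y"
      hence "(H x - 1) div g = (H y - 1) div g" using phi(2)[OF xy(1)] phi(2)[OF xy(2)] by simp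
      hence "H x - 1 = H y - 1" using hB(3)[OF xy(1)] hB(3)[OF xy(2)] by metis
      moreover have "1 \<le> H x" "1 \<le> H y" using H_pos xy BA by auto
      ultimately have "H x = H y" by arith
      thus "x = y" using H_inj[OF pA Bp[OF xy(1)] Bp[OF xy(2)]] by simp
    qed
    show "\<phi> ` B = dn q"
    proof
      show "\<phi> ` B \<subseteq> dn q"
      proof
        fix w assume "w \<in> \<phi> ` B"
        then obtain x where x: "x \<in> B" "w = \<phi> x" by blast
        have "H w \<le> H q" using phi(2)[OF x(1)] hB(1)[OF x(1)] qd(2) x(2) by simp
        hence "f w q = z" using le_of_H[OF _ qd(1)] phi(1)[OF x(1)] x(2) by simp
        thus "w \<in> dn q" unfolding dn_def using phi(1)[OF x(1)] x(2) unfolding dn_def by simp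
      qed
    next
      show "dn q \<subseteq> \<phi> ` B"
      proof
        fix w assume w: "w \<in> dn q"
        have wA: "w \<in> A" "f w q = z" using w unfolding dn_def by auto
        have wp: "w \<in> dn p" using dn_mono[OF qA pA] qd(1) w unfolding dn_def by auto
        define k where "k = H w - 1"
        have Hw: "H w = k + 1" using H_pos[OF wA(1)] k_def by simp
        have kN: "k \<le> N" using H_mono[OF wA(1) qA wA(2)] qd(2) Hw by simp
        have kg: "k * g \<le> H p - 1" using mult_le_mono1[OF kN, of g] Ng by simp
        define x where "x = el (k * g)"
        have xd: "x \<in> dn p" "H x = k * g + 1" using el[OF kg] x_def by auto
        have xB: "x \<in> B" using fill[OF p(1) xd(1)] xd(2) by simp
        have "(H x - 1) div g = k" using xd(2) g_pos by simp
        hence "\<phi> x = el k" unfolding \<phi>_def by simp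
        also have "el k = w" using el_uni[OF _ wp Hw] kN N1 by simp
        finally show "w \<in> \<phi> ` B" using xB by blast
      qed
    qed
  qed
  have phiz: "\<phi> z = z"
  proof -
    have "z \<in> dn p" unfolding dn_def using zA z_le[OF pA] by simp
    thus ?thesis unfolding \<phi>_def using el_uni[of 0 z] H_z by simp
  qed
  have hom: "\<phi> (f x y) = f (\<phi> x) (\<phi> y)" if xy: "x \<in> B" "y \<in> B" for x y
  proof -
    have xA: "x \<in> A" and yA: "y \<in> A" using xy BA by auto
    define a where "a = (H x - 1) div g"
    define b where "b = (H y - 1) div g"
    have pa: "\<phi> x \<in> dn p" "H (\<phi> x) = a + 1" using phi[OF xy(1)] a_def by auto
    have pb: "\<phi> y \<in> dn p" "H (\<phi> y) = b + 1" using phi[OF xy(2)] b_def by auto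
    have pxA: "\<phi> x \<in> A" and pyA: "\<phi> y \<in> A" using pa(1) pb(1) unfolding dn_def by auto
    have ag: "a * g = H x - 1" and bg: "b * g = H y - 1" using hB(3) xy a_def b_def by auto
    show ?thesis
    proof (cases "f y x = z")
      case True
      have sig: "H (f x y) + H y = H x + 1" using H_sig[OF xA yA True] .
      have "H y \<le> H x" using H_mono[OF yA xA True] .
      hence "b * g \<le> a * g" using ag bg by arith
      hence ba: "b \<le> a" using g_pos by simp
      have e1: "H (f x y) - 1 = (a - b) * g" using sig ag bg H_pos[OF yA] by (simp add: diff_mult_distrib)
      have fxyB: "f x y \<in> B" using Bcl xy by auto
      have l: "\<phi> (f x y) = el (a - b)" unfolding \<phi>_def using e1 g_pos by simp
      have "f (\<phi> y) (\<phi> x) = z" using le_of_H[OF pb(1) pa(1)] pa(2) pb(2) ba by simp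
      hence sig2: "H (f (\<phi> x) (\<phi> y)) + (b + 1) = (a + 1) + 1" using H_sig[OF pxA pyA] pa pb by simp
      have "f (\<phi> x) (\<phi> y) \<in> dn p"
      proof -
        have "f (f (\<phi> x) (\<phi> y)) (\<phi> x) = z" using sub_le[OF pxA pyA] .
        moreover have "f (\<phi> x) p = z" using pa(1) unfolding dn_def by simp
        ultimately have "f (f (\<phi> x) (\<phi> y)) p = z" using trans_le[OF cl[OF pxA pyA] pxA pA] by blast
        thus ?thesis unfolding dn_def using cl[OF pxA pyA] by simp
      qed
      moreover have "a - b \<le> H p - 1" using hB(2)[OF xy(1)] a_def by simp
      ultimately have "el (a - b) = f (\<phi> x) (\<phi> y)" using el_uni sig2 ba by simp
      thus ?thesis using l by simp
    next
      case False
      have xy0: "f x y = z" using False ch xy unfolding is_chain_def bleq_def by auto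
      have "H x \<le> H y" using H_mono[OF xA yA xy0] .
      hence "a \<le> b" unfolding a_def b_def by (intro div_le_mono) simp
      hence "f (\<phi> x) (\<phi> y) = z" using le_of_H[OF pa(1) pb(1)] pa(2) pb(2) by simp
      thus ?thesis using xy0 phiz by simp
    qed
  qed
  have "alg_iso f z B (dn q)" unfolding alg_iso_def using bij phiz hom by blast
  thus ?thesis using dn_subd[OF qA] by blast
qed

end

lemma iso_refl: "alg_iso f z B B"
  unfolding alg_iso_def by (rule exI[of _ id]) simp

lemma subd_subs: "Subs_d A f z \<subseteq> Subs A f z"
  unfolding Subs_d_def Subs_def by auto

lemma delta_subs: "Subs_delta_set (Subs_d A f z) f z \<subseteq> Subs A f z"
proof
  fix D assume "D \<in> Subs_delta_set (Subs_d A f z) f z"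
  then obtain C where C: "C \<in> Subs_d A f z" "D \<in> Subs_delta C f z" unfolding Subs_delta_set_def by blast
  have "subalg A f z C" "subalg C f z D" using C unfolding Subs_d_def Subs_delta_def by auto
  thus "D \<in> Subs A f z" unfolding Subs_def subalg_def by auto
qed

theorem mainTheorem4:
  fixes A :: "'a set" and f :: "'a \<Rightarrow> 'a \<Rightarrow> 'a" and z :: 'a
  assumes "cbck A f z" and "finite A" and "subdir_irred A f"
  shows "eq_upto_iso f z (Subs A f z)
           (Subs_d A f z \<union> Subs_delta_set (Subs_d A f z) f z)
       \<and> ((\<forall>D\<in>Subs_delta_set (Subs_d A f z) f z. is_chain D f z)
            \<longrightarrow> eq_upto_iso f z (Subs A f z) (Subs_d A f z))"
proof -
  have cbA: "cb A f z" using assms(1) unfolding cb_def cbck_def bck_def by blast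
  have fcbA: "fcb A f z" unfolding fcb_def fcb_axioms_def
    using cbA assms(2) cb.si_atom[OF cbA assms(3)] by blast
  have cases: "B \<in> Subs_d A f z \<or> (\<exists>D\<in>Subs_d A f z. alg_iso f z B D)
      \<or> (B \<in> Subs_delta_set (Subs_d A f z) f z \<and> (is_chain B f z \<longrightarrow> (\<exists>D\<in>Subs_d A f z. alg_iso f z B D)))"
    if B: "B \<in> Subs A f z" for B
  proof (cases "B = {z}")
    case True
    have "B \<in> Subs_d A f z" unfolding True Subs_d_def subalg_def is_downset_def bleq_def
      using cb.zA[OF cbA] cb.ax2[OF cbA] cb.refl0[OF cbA] by auto
    thus ?thesis by simp
  next
    case False
    have sB: "sub A f z B" unfolding sub_def sub_axioms_def using fcbA B False
      unfolding Subs_def subalg_def by blast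
    show ?thesis using sub.tri[OF sB] sub.chain_iso[OF sB] by blast
  qed
  have p1: "eq_upto_iso f z (Subs A f z) (Subs_d A f z \<union> Subs_delta_set (Subs_d A f z) f z)"
    unfolding eq_upto_iso_def
  proof (intro conjI ballI)
    fix B assume "B \<in> Subs A f z"
    from cases[OF this]
    show "\<exists>D\<in>Subs_d A f z \<union> Subs_delta_set (Subs_d A f z) f z. alg_iso f z B D"
    proof (elim disjE conjE)
      assume "B \<in> Subs_d A f z" thus ?thesis using iso_refl[of f z B] by blast
    next
      assume "\<exists>D\<in>Subs_d A f z. alg_iso f z B D" thus ?thesis by blast
    next
      assume "B \<in> Subs_delta_set (Subs_d A f z) f z" thus ?thesis using iso_refl[of f z B] by blast
    qed
  next
    fix D assume "D \<in> Subs_d A f z \<union> Subs_delta_set (Subs_d A f z) f z"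
    hence "D \<in> Subs A f z" using subd_subs[of A f z] delta_subs[of A f z] by blast
    thus "\<exists>B\<in>Subs A f z. alg_iso f z D B" using iso_refl[of f z D] by blast
  qed
  have p2: "eq_upto_iso f z (Subs A f z) (Subs_d A f z)"
    if h: "\<forall>D\<in>Subs_delta_set (Subs_d A f z) f z. is_chain D f z"
    unfolding eq_upto_iso_def
  proof (intro conjI ballI)
    fix B assume "B \<in> Subs A f z"
    from cases[OF this]
    show "\<exists>D\<in>Subs_d A f z. alg_iso f z B D"
    proof (elim disjE conjE)
      assume "B \<in> Subs_d A f z" thus ?thesis using iso_refl[of f z B] by blast
    next
      assume "\<exists>D\<in>Subs_d A f z. alg_iso f z B D" thus ?thesis by blast
    next
      assume a: "B \<in> Subs_delta_set (Subs_d A f z) f z" "is_chain B f z \<longrightarrow> (\<exists>D\<in>Subs_d A f z. alg_iso f z B D)"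
      thus ?thesis using h by blast
    qed
  next
    fix D assume "D \<in> Subs_d A f z"
    hence "D \<in> Subs A f z" using subd_subs[of A f z] by blast
    thus "\<exists>B\<in>Subs A f z. alg_iso f z D B" using iso_refl[of f z D] by blast
  qed
  show ?thesis using p1 p2 by blast
qed

end
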